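(* Let $\mathcal E$ be an exchangeability system for a noncommutative probability space $(\mathcal A,\phi)$ and $X_1,\dots,X_n\in\mathcal A$. Then $$K_n(X_1,\dots,X_n)=\sum_{\pi\in\Pi_n}\phi_\pi(X_1,\dots,X_n)\,\mu(\pi,\hat1_n),$$ where $\mu$ is the Möbius function of the partition lattice $\Pi_n$.
   Context: A noncommutative probability space is a pair $(\mathcal A,\phi)$ of a complex unital algebra $\mathcal A$ and a unital linear functional $\phi$. An exchangeability system $\mathcal E$ for $(\mathcal A,\phi)$ consists of a noncommutative probability space $(\mathcal U,\tilde\phi)$ and a family $(\iota_k)_{k\in\mathbb N}$ of embeddings (injective unital algebra homomorphisms) $\iota_k:\mathcal A\to\mathcal A_k\subseteq\mathcal U$ with $\tilde\phi\circ\iota_k=\phi$; write $X^{(k)}=\iota_k(X)$. It is required that for all $X_1,\dots,X_n\in\mathcal A$, all indices $i_1,\dots,i_n\in\mathbb N$ and every bijection $\sigma$ of $\mathbb N$, $\tilde\phi(X_1^{(i_1)}\cdots X_n^{(i_n)})=\tilde\phi(X_1^{(\sigma(i_1))}\cdots X_n^{(\sigma(i_n))})$; so this value depends only on the kernel of $h:j\mapsto i_j$ (the partition of $[n]=\{1,\dots,n\}$ into the level sets of $h$), and for a partition $\pi$ it is denoted $\phi_\pi(X_1,\dots,X_n)$. $\Pi_n$ is the lattice of set partitions of $[n]$ ordered by refinement, $\hat1_n$ its maximal element (one block). For a primitive $n$-th root of unity $\omega$ put $X_j^\omega=\sum_{k=1}^n\omega^kX_j^{(k)}$ and $K_n(X_1,\dots,X_n)=\frac1n\tilde\phi(X_1^\omega\cdots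 X_n^\omega)$. *)

theory Defs
  imports Complex_Main "HOL-Library.Disjoint_Sets"
begin

definition complex_algebra :: "(complex \<Rightarrow> 'a::ring_1 \<Rightarrow> 'a) \<Rightarrow> bool" where
  "complex_algebra sc \<longleftrightarrow> vector_space sc \<and>
     (\<forall>c x y. sc c (x * y) = sc c x * y \<and> sc c (x * y) = x * sc c y)"

definition nc_prob_space :: "(complex \<Rightarrow> 'a::ring_1 \<Rightarrow> 'a) \<Rightarrow> ('a \<Rightarrow> complex) \<Rightarrow> bool" where
  "nc_prob_space sc phi \<longleftrightarrow> complex_algebra sc \<and>
     Vector_Spaces.linear sc (\<lambda>c z. c * z) phi \<and> phi 1 = 1"

definition alg_embedding ::
  "(complex \<Rightarrow> 'a::ring_1 \<Rightarrow> 'a) \<Rightarrow> (complex \<Rightarrow> 'u::ring_1 \<Rightarrow> 'u) \<Rightarrow> ('a \<Rightarrow> 'u) \<Rightarrow> bool" where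
  "alg_embedding sA sU f \<longleftrightarrow> inj f \<and> Vector_Spaces.linear sA sU f \<and> f 1 = 1 \<and>
     (\<forall>x y. f (x * y) = f x * f y)"

definition mixed_moment :: "('u::ring_1 \<Rightarrow> complex) \<Rightarrow> (nat \<Rightarrow> 'a \<Rightarrow> 'u) \<Rightarrow> 'a list \<Rightarrow> (nat \<Rightarrow> nat) \<Rightarrow> complex" where
  "mixed_moment phit iota xs h = phit (prod_list (map (\<lambda>j. iota (h j) (xs ! j)) [0..<length xs]))"

definition exchangeability_system ::
  "(complex \<Rightarrow> 'a::ring_1 \<Rightarrow> 'a) \<Rightarrow> ('a \<Rightarrow> complex) \<Rightarrow>
   (complex \<Rightarrow> 'u::ring_1 \<Rightarrow> 'u) \<Rightarrow> ('u \<Rightarrow> complex) \<Rightarrow> (nat \<Rightarrow> 'a \<Rightarrow> 'u) \<Rightarrow> bool" where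
  "exchangeability_system sA phi sU phit iota \<longleftrightarrow>
     nc_prob_space sA phi \<and> nc_prob_space sU phit \<and>
     (\<forall>k. alg_embedding sA sU (iota k) \<and> (\<forall>x. phit (iota k x) = phi x)) \<and>
     (\<forall>xs h \<sigma>. bij \<sigma> \<longrightarrow> mixed_moment phit iota xs (\<sigma> \<circ> h) = mixed_moment phit iota xs h)"

definition kernel_partition :: "nat \<Rightarrow> (nat \<Rightarrow> nat) \<Rightarrow> nat set set" where
  "kernel_partition n h = (\<lambda>i. {j \<in> {0..<n}. h j = h i}) ` {0..<n}"

text \<open>phi_pi(X_1,...,X_n): the common value of mixed moments whose index kernel is pi.\<close>
definition phi_pi :: "('u::ring_1 \<Rightarrow> complex) \<Rightarrow> (nat \<Rightarrow> 'a \<Rightarrow> 'u) \<Rightarrow> nat set set \<Rightarrow> 'a list \<Rightarrow> complex" where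
  "phi_pi phit iota \<pi> xs =
     mixed_moment phit iota xs (SOME h. kernel_partition (length xs) h = \<pi>)"

definition set_partitions :: "nat \<Rightarrow> nat set set set" where
  "set_partitions n = {P. partition_on {0..<n} P}"

definition refines :: "'a set set \<Rightarrow> 'a set set \<Rightarrow> bool" where
  "refines P Q \<longleftrightarrow> (\<forall>B\<in>P. \<exists>C\<in>Q. B \<subseteq> C)"

definition top_partition :: "nat \<Rightarrow> nat set set" where
  "top_partition n = {{0..<n}}"

definition moebius :: "'a set \<Rightarrow> ('a \<Rightarrow> 'a \<Rightarrow> bool) \<Rightarrow> 'a \<Rightarrow> 'a \<Rightarrow> int" where
  "moebius S le = (THE m.
     (\<forall>x y. \<not> (x \<in> S \<and> y \<in> S \<and> le x y) \<longrightarrow> m x y = 0) \<and>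
     (\<forall>x\<in>S. \<forall>y\<in>S. le x y \<longrightarrow>
        (\<Sum>z\<in>{z\<in>S. le x z \<and> le z y}. m x z) = (if x = y then 1 else 0)))"

definition primitive_root :: "nat \<Rightarrow> complex \<Rightarrow> bool" where
  "primitive_root n \<omega> \<longleftrightarrow> \<omega> ^ n = 1 \<and> (\<forall>k\<in>{1..<n}. \<omega> ^ k \<noteq> 1)"

definition K_cum :: "(complex \<Rightarrow> 'u::ring_1 \<Rightarrow> 'u) \<Rightarrow> ('u \<Rightarrow> complex) \<Rightarrow> (nat \<Rightarrow> 'a \<Rightarrow> 'u) \<Rightarrow>
    complex \<Rightarrow> 'a list \<Rightarrow> complex" where
  "K_cum sU phit iota \<omega> xs =
     (1 / of_nat (length xs)) *
     phit (prod_list (map (\<lambda>x. \<Sum>k=1..length xs. sU (\<omega> ^ k) (iota k x)) xs))"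

end

theory Submission
  imports Defs "HOL-Library.FuncSet" "HOL-Library.Infinite_Set"
begin


lemma prod_list_upt_comm: "prod_list (map (f::nat \<Rightarrow> 'b::comm_monoid_mult) [0..<m]) = prod f {0..<m}"
  by (induction m) auto

lemma prod_list_expand:
  fixes f :: "nat \<Rightarrow> 'k \<Rightarrow> 'u::ring_1"
  assumes "finite K"
  shows "prod_list (map (\<lambda>j. \<Sum>k\<in>K. f j k) [0..<m]) =
    (\<Sum>h\<in>PiE {0..<m} (\<lambda>_. K). prod_list (map (\<lambda>j. f j (h j)) [0..<m]))"
proof (induction m)
  case 0
  then show ?case by simp
next
  case (Suc m)
  have "prod_list (map (\<lambda>j. \<Sum>k\<in>K. f j k) [0..<Suc m]) =
     (\<Sum>h\<in>PiE {0..<m} (\<lambda>_. K). prod_list (map (\<lambda>j. f j (h j)) [0..<m])) * (\<Sum>k\<in>K. f m k)"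
    using Suc by simp
  also have "\<dots> = (\<Sum>h\<in>PiE {0..<m} (\<lambda>_. K). \<Sum>k\<in>K. prod_list (map (\<lambda>j. f j (h j)) [0..<m]) * f m k)"
    unfolding sum_distrib_right by (simp only: sum_distrib_left)
  also have "\<dots> = (\<Sum>(k,h)\<in>K \<times> PiE {0..<m} (\<lambda>_. K). prod_list (map (\<lambda>j. f j (h j)) [0..<m]) * f m k)"
    unfolding sum.cartesian_product[symmetric]
    by (rule sum.swap[where g="\<lambda>h k. prod_list (map (\<lambda>j. f j (h j)) [0..<m]) * f m k" and A="PiE {0..<m} (\<lambda>_. K)" and B=K])
  also have "\<dots> = (\<Sum>(k,h)\<in>K \<times> PiE {0..<m} (\<lambda>_. K). prod_list (map (\<lambda>j. f j ((h(m:=k)) j)) [0..<Suc m]))"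
  proof (intro sum.cong refl, clarsimp)
    fix k h
    have eq: "map (\<lambda>j. f j (if j = m then k else h j)) [0..<m] = map (\<lambda>j. f j (h j)) [0..<m]" by auto
    show "prod_list (map (\<lambda>j. f j (h j)) [0..<m]) * f m k =
       prod_list (map (\<lambda>j. f j (if j = m then k else h j)) [0..<m]) * f m k"
      by (simp only: eq)
  qed
  also have "\<dots> = (\<Sum>h\<in>(\<lambda>(y, g). g(m := y)) ` (K \<times> PiE {0..<m} (\<lambda>_. K)). prod_list (map (\<lambda>j. f j (h j)) [0..<Suc m]))"
    by (subst sum.reindex) (auto intro!: inj_combinator simp: case_prod_beta)
  also have "(\<lambda>(y, g). g(m := y)) ` (K \<times> PiE {0..<m} (\<lambda>_. K)) = PiE {0..<Suc m} (\<lambda>_. K)"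
    using PiE_insert_eq[of m "{0..<m}" "\<lambda>_. K"] by (simp add: atLeast0_lessThan_Suc)
  finally show ?case .
qed

lemma scale_prod_list:
  assumes "complex_algebra sc"
  shows "prod_list (map (\<lambda>j. sc (c j) (u j)) js) = sc (prod_list (map c js)) (prod_list (map u js))"
proof (induction js)
  case Nil
  then show ?case using assms by (simp add: complex_algebra_def vector_space_def)
next
  case (Cons a js)
  have vs: "sc x (sc y z) = sc (x*y) z" for x y z using assms by (simp add: complex_algebra_def vector_space_def)
  have cA: "\<forall>c x y. sc c (x * y) = sc c x * y \<and> sc c (x * y) = x * sc c y"
    using assms unfolding complex_algebra_def by blast
  have m1: "sc x p * q = sc x (p * q)" and m2: "p * sc x q = sc x (p * q)" for x p q
    using cA by metis+
  have "sc (c a) (u a) * sc (prod_list (map c js)) (prod_list (map u js)) =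
     sc (c a) (sc (prod_list (map c js)) (u a * prod_list (map u js)))" by (subst m1, subst m2, rule refl)
  then show ?case using Cons by (simp add: vs)
qed

lemma bij_extend_nat:
  fixes f :: "nat \<Rightarrow> nat"
  assumes "finite A" "inj_on f A"
  shows "\<exists>\<sigma>. bij \<sigma> \<and> (\<forall>x\<in>A. \<sigma> x = f x)"
proof -
  define B where "B = f ` A"
  have fB: "finite B" using assms by (simp add: B_def)
  have iA: "infinite (- A)" using assms(1) by (simp add: Compl_eq_Diff_UNIV infinite_UNIV_nat Diff_infinite_finite)
  have iB: "infinite (- B)" using fB by (simp add: Compl_eq_Diff_UNIV infinite_UNIV_nat Diff_infinite_finite)
  define g where "g = Infinite_Set.enumerate (- B) \<circ> inv_into UNIV (Infinite_Set.enumerate (- A))"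
  have bg: "bij_betw g (- A) (- B)"
    unfolding g_def by (rule bij_betw_trans[OF bij_betw_inv_into[OF bij_enumerate[OF iA]] bij_enumerate[OF iB]])
  define \<sigma> where "\<sigma> x = (if x \<in> A then f x else g x)" for x
  have b1: "bij_betw \<sigma> A B" using assms(2) unfolding B_def bij_betw_def \<sigma>_def
    by (auto simp: inj_on_def image_def)
  have b2: "bij_betw \<sigma> (- A) (- B)" using bg unfolding \<sigma>_def by (rule bij_betw_cong[THEN iffD1, rotated]) auto
  have "bij_betw \<sigma> (A \<union> - A) (B \<union> - B)" by (rule bij_betw_combine[OF b1 b2]) auto
  then have "bij \<sigma>" by simp
  then show ?thesis unfolding \<sigma>_def by auto
qed




function mu_fn :: "'a set \<Rightarrow> ('a \<Rightarrow> 'a \<Rightarrow> bool) \<Rightarrow> 'a \<Rightarrow> 'a \<Rightarrow> int" where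
"mu_fn S le x y = (if x \<in> S \<and> y \<in> S \<and> le x y then (if x = y then 1 else
   - (\<Sum>z \<in> {z\<in>S. le x z \<and> le z y \<and> z \<noteq> y \<and> card {w\<in>S. le x w \<and> le w z} < card {w\<in>S. le x w \<and> le w y}}. mu_fn S le x z)) else 0)"
  by pat_completeness auto
termination by (relation "measure (\<lambda>(S,le,x,y). card {w\<in>S. le x w \<and> le w y})") auto

declare mu_fn.simps[simp del]

definition moeb_prop where
"moeb_prop S le (m :: 'a \<Rightarrow> 'a \<Rightarrow> int) \<longleftrightarrow> (\<forall>x y. \<not> (x \<in> S \<and> y \<in> S \<and> le x y) \<longrightarrow> m x y = 0) \<and>
     (\<forall>x\<in>S. \<forall>y\<in>S. le x y \<longrightarrow>
        (\<Sum>z\<in>{z\<in>S. le x z \<and> le z y}. m x z) = (if x = y then 1 else 0))"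

lemma moebius_prop:
  assumes fin: "finite S" and rf: "\<forall>x\<in>S. le x x"
    and an: "\<forall>x\<in>S. \<forall>y\<in>S. le x y \<longrightarrow> le y x \<longrightarrow> x = y"
    and tr: "\<forall>x\<in>S. \<forall>y\<in>S. \<forall>z\<in>S. le x y \<longrightarrow> le y z \<longrightarrow> le x z"
  shows "moeb_prop S le (moebius S le)"
proof -
  define I where "I x y = {w\<in>S. le x w \<and> le w y}" for x y
  have guard: "card (I x z) < card (I x y)" if "x \<in> S" "y \<in> S" "z \<in> S" "le x z" "le z y" "z \<noteq> y" for x y z
  proof (rule psubset_card_mono)
    show "finite (I x y)" using fin by (simp add: I_def)
    have "I x z \<subseteq> I x y"
    proof
      fix w assume "w \<in> I x z"
      then have w: "w \<in> S" "le x w" "le w z" unfolding I_def by simp_all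
      have "le w y" using tr[rule_format, OF w(1) that(3) that(2) w(3) that(5)] .
      then show "w \<in> I x y" using w unfolding I_def by simp
    qed
    moreover have "y \<in> I x y"
    proof -
      have "le x y" using tr[rule_format, OF that(1) that(3) that(2) that(4) that(5)] .
      moreover have "le y y" using rf that(2) by blast
      ultimately show ?thesis using that(2) unfolding I_def by simp
    qed
    moreover have "y \<notin> I x z"
    proof
      assume "y \<in> I x z"
      then have "le y z" unfolding I_def by simp
      then have "z = y" using an[rule_format, OF that(3) that(2) that(5)] by simp
      then show False using that(6) by simp
    qed
    ultimately show "I x z \<subset> I x y" by blast
  qed
  have single: "{z\<in>S. le x z \<and> le z x} = {x}" if "x \<in> S" for x
  proof (rule set_eqI)
    fix z
    show "z \<in> {z\<in>S. le x z \<and> le z x} \<longleftrightarrow> z \<in> {x}"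
    proof
      assume "z \<in> {z\<in>S. le x z \<and> le z x}"
      then have "z \<in> S" "le x z" "le z x" by simp_all
      then show "z \<in> {x}" using an[rule_format, OF that \<open>z \<in> S\<close>] by simp
    next
      assume "z \<in> {x}"
      then show "z \<in> {z\<in>S. le x z \<and> le z x}" using that rf by simp
    qed
  qed
  have split: "{z\<in>S. le x z \<and> le z y} = insert y {z\<in>S. le x z \<and> le z y \<and> z \<noteq> y}"
    if "x \<in> S" "y \<in> S" "le x y" for x y
  proof -
    have "le y y" using rf that(2) by blast
    then show ?thesis using that by auto
  qed
  have ex: "moeb_prop S le (mu_fn S le)"
    unfolding moeb_prop_def
  proof (intro conjI allI impI ballI)
    fix x y assume "\<not> (x \<in> S \<and> y \<in> S \<and> le x y)"
    then show "mu_fn S le x y = 0" by (subst mu_fn.simps) auto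
  next
    fix x y assume xy: "x \<in> S" "y \<in> S" "le x y"
    show "(\<Sum>z\<in>{z\<in>S. le x z \<and> le z y}. mu_fn S le x z) = (if x = y then 1 else 0)"
    proof (cases "x = y")
      case True
      have "mu_fn S le x x = 1" using xy(1) rf by (subst mu_fn.simps) simp
      then show ?thesis using single[OF xy(1)] True by simp
    next
      case False
      have eqs: "{z\<in>S. le x z \<and> le z y \<and> z \<noteq> y \<and> card {w\<in>S. le x w \<and> le w z} < card {w\<in>S. le x w \<and> le w y}}
         = {z\<in>S. le x z \<and> le z y \<and> z \<noteq> y}"
        using guard[OF xy(1,2)] unfolding I_def by auto
      have "mu_fn S le x y = - (\<Sum>z\<in>{z\<in>S. le x z \<and> le z y \<and> z \<noteq> y}. mu_fn S le x z)"
        using xy False by (subst mu_fn.simps) (simp only: eqs, simp)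
      then show ?thesis using False xy fin by (simp add: split)
    qed
  qed
  have un: "m = mu_fn S le" if m: "moeb_prop S le m" for m
  proof -
    have "m x y = mu_fn S le x y" for x y
    proof (induction "card (I x y)" arbitrary: y rule: less_induct)
      case less
      show ?case
      proof (cases "x \<in> S \<and> y \<in> S \<and> le x y")
        case False
        have "m x y = 0" using m False unfolding moeb_prop_def by blast
        moreover have "mu_fn S le x y = 0" using ex False unfolding moeb_prop_def by blast
        ultimately show ?thesis by simp
      next
        case xy: True
        show ?thesis
        proof (cases "x = y")
          case True
          have a1: "(\<Sum>z\<in>{z\<in>S. le x z \<and> le z y}. m x z) = (if x = y then 1 else 0)"
            using m xy unfolding moeb_prop_def by blast
          have a2: "(\<Sum>z\<in>{z\<in>S. le x z \<and> le z y}. mu_fn S le x z) = (if x = y then 1 else 0)"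
            using ex xy unfolding moeb_prop_def by blast
          show ?thesis using a1 a2 True single[of x] xy by simp
        next
          case False
          have s1: "m x y + (\<Sum>z\<in>{z\<in>S. le x z \<and> le z y \<and> z \<noteq> y}. m x z) = 0"
            using m xy False fin unfolding moeb_prop_def by (auto simp: split)
          have s2: "mu_fn S le x y + (\<Sum>z\<in>{z\<in>S. le x z \<and> le z y \<and> z \<noteq> y}. mu_fn S le x z) = 0"
            using ex xy False fin unfolding moeb_prop_def by (auto simp: split)
          have "(\<Sum>z\<in>{z\<in>S. le x z \<and> le z y \<and> z \<noteq> y}. m x z) = (\<Sum>z\<in>{z\<in>S. le x z \<and> le z y \<and> z \<noteq> y}. mu_fn S le x z)"
            using less guard xy by (intro sum.cong) auto
          then show ?thesis using s1 s2 by linarith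
        qed
      qed
    qed
    then show ?thesis by blast
  qed
  have "moeb_prop S le (THE m. moeb_prop S le m)"
    by (rule theI[of "moeb_prop S le" "mu_fn S le"]) (rule ex, rule un)
  then show ?thesis unfolding moebius_def moeb_prop_def[symmetric] .
qed




lemma ker_in_SP: "kernel_partition n h \<in> set_partitions n"
  unfolding set_partitions_def kernel_partition_def mem_Collect_eq
proof (rule partition_onI)
  show "\<Union> ((\<lambda>i. {j \<in> {0..<n}. h j = h i}) ` {0..<n}) = {0..<n}" by auto
  show "{} \<notin> (\<lambda>i. {j \<in> {0..<n}. h j = h i}) ` {0..<n}" by auto
  fix p q assume a: "p \<in> (\<lambda>i. {j \<in> {0..<n}. h j = h i}) ` {0..<n}" "q \<in> (\<lambda>i. {j \<in> {0..<n}. h j = h i}) ` {0..<n}" "p \<noteq> q"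
  then obtain i i' where ii: "p = {j \<in> {0..<n}. h j = h i}" "q = {j \<in> {0..<n}. h j = h i'}" by blast
  then have "h i \<noteq> h i'" using a(3) by auto
  then show "disjnt p q" unfolding disjnt_def ii by auto
qed

lemma SP_finite: "finite (set_partitions n)"
proof (rule finite_subset)
  show "set_partitions n \<subseteq> Pow (Pow {0..<n})"
  proof
    fix P assume "P \<in> set_partitions n"
    then have "\<Union>P = {0..<n}" unfolding set_partitions_def partition_on_def by simp
    then show "P \<in> Pow (Pow {0..<n})" by blast
  qed
qed simp

lemma SP_blocks: "P \<in> set_partitions n \<Longrightarrow> B \<in> P \<Longrightarrow> B \<subseteq> {0..<n} \<and> B \<noteq> {}"
proof -
  assume "P \<in> set_partitions n" "B \<in> P"
  moreover have "\<Union>P = {0..<n} \<and> {} \<notin> P" using calculation(1) unfolding set_partitions_def partition_on_def by simp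
  ultimately show ?thesis by blast
qed

lemma SP_disj: "P \<in> set_partitions n \<Longrightarrow> B \<in> P \<Longrightarrow> C \<in> P \<Longrightarrow> x \<in> B \<Longrightarrow> x \<in> C \<Longrightarrow> B = C"
proof -
  assume a: "P \<in> set_partitions n" "B \<in> P" "C \<in> P" "x \<in> B" "x \<in> C"
  have "disjoint P" using a(1) unfolding set_partitions_def partition_on_def by simp
  then show "B = C" using a(2-5) unfolding disjoint_def by blast
qed

lemma SP_cover: "P \<in> set_partitions n \<Longrightarrow> i < n \<Longrightarrow> \<exists>B\<in>P. i \<in> B"
proof -
  assume a: "P \<in> set_partitions n" "i < n"
  have "\<Union>P = {0..<n}" using a(1) unfolding set_partitions_def partition_on_def by simp
  then have "i \<in> \<Union>P" using a(2) by simp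
  then show ?thesis by blast
qed

lemma refines_refl': "refines P P" unfolding refines_def by auto

lemma refines_trans': "refines P Q \<Longrightarrow> refines Q R \<Longrightarrow> refines P R"
  unfolding refines_def by (meson subset_trans)

lemma refines_antisym':
  assumes "P \<in> set_partitions n" "Q \<in> set_partitions n" "refines P Q" "refines Q P"
  shows "P = Q"
proof -
  have sub: "P \<subseteq> Q" if a1: "P \<in> set_partitions n" and a3: "refines P Q" and a4: "refines Q P" for P Q
  proof
    fix B assume B: "B \<in> P"
    obtain C where C: "C \<in> Q" "B \<subseteq> C" using a3 B unfolding refines_def by auto
    obtain D where D: "D \<in> P" "C \<subseteq> D" using a4 C unfolding refines_def by auto
    obtain x where "x \<in> B" using SP_blocks[OF a1 B] by auto
    then have "B = D" using SP_disj[OF a1 B D(1)] C D by auto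
    then show "B \<in> Q" using C D by auto
  qed
  show ?thesis using sub[of P Q] sub[of Q P] assms by auto
qed

lemma refines_ker_iff:
  assumes "\<sigma> \<in> set_partitions n"
  shows "refines \<sigma> (kernel_partition n h) \<longleftrightarrow> (\<forall>C\<in>\<sigma>. \<forall>i\<in>C. \<forall>j\<in>C. h i = h j)"
proof
  assume r: "refines \<sigma> (kernel_partition n h)"
  show "\<forall>C\<in>\<sigma>. \<forall>i\<in>C. \<forall>j\<in>C. h i = h j"
  proof (intro ballI)
    fix C i j assume C: "C \<in> \<sigma>" and ij: "i \<in> C" "j \<in> C"
    obtain D where D: "D \<in> kernel_partition n h" "C \<subseteq> D" using r C unfolding refines_def by blast
    obtain i0 where "D = {k \<in> {0..<n}. h k = h i0}" using D(1) unfolding kernel_partition_def by blast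
    then have "h i = h i0" "h j = h i0" using D(2) ij by auto
    then show "h i = h j" by simp
  qed
next
  assume c: "\<forall>C\<in>\<sigma>. \<forall>i\<in>C. \<forall>j\<in>C. h i = h j"
  show "refines \<sigma> (kernel_partition n h)" unfolding refines_def
  proof
    fix C assume C: "C \<in> \<sigma>"
    then obtain i where i: "i \<in> C" using SP_blocks[OF assms] by blast
    have Cs: "C \<subseteq> {0..<n}" using SP_blocks[OF assms C] by auto
    have ci: "\<forall>x\<in>C. h x = h i" using c C i by blast
    have "C \<subseteq> {j \<in> {0..<n}. h j = h i}"
    proof
      fix x assume x: "x \<in> C"
      then have "x \<in> {0..<n}" using Cs by blast
      then show "x \<in> {j \<in> {0..<n}. h j = h i}" using ci x by simp
    qed
    moreover have "i \<in> {0..<n}" using Cs i by blast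
    then have "{j \<in> {0..<n}. h j = h i} \<in> kernel_partition n h"
      unfolding kernel_partition_def by (rule imageI)
    ultimately show "\<exists>D\<in>kernel_partition n h. C \<subseteq> D" by blast
  qed
qed

lemma moeb_inversion:
  fixes G F :: "'a \<Rightarrow> complex"
  assumes fin: "finite S" and rf: "\<forall>x\<in>S. le x x"
    and tr: "\<forall>x\<in>S. \<forall>y\<in>S. \<forall>z\<in>S. le x y \<longrightarrow> le y z \<longrightarrow> le x z"
    and mp: "moeb_prop S le m" and p: "p \<in> S"
    and F: "\<forall>s\<in>S. F s = (\<Sum>t\<in>{t\<in>S. le s t}. G t)"
  shows "(\<Sum>s\<in>{s\<in>S. le p s}. of_int (m p s) * F s) = G p"
proof -
  have "(\<Sum>s\<in>{s\<in>S. le p s}. of_int (m p s) * F s) = (\<Sum>s\<in>S. if le p s then of_int (m p s) * F s else 0)"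
    by (simp add: sum.inter_filter fin)
  also have "\<dots> = (\<Sum>s\<in>S. \<Sum>t\<in>S. if le p s \<and> le s t then of_int (m p s) * G t else 0)"
  proof (rule sum.cong[OF refl])
    fix s assume s: "s \<in> S"
    show "(if le p s then of_int (m p s) * F s else 0) = (\<Sum>t\<in>S. if le p s \<and> le s t then of_int (m p s) * G t else 0)"
    proof (cases "le p s")
      case True
      have "of_int (m p s) * F s = (\<Sum>t\<in>{t\<in>S. le s t}. of_int (m p s) * G t)"
        using F s by (simp add: sum_distrib_left)
      also have "\<dots> = (\<Sum>t\<in>S. if le s t then of_int (m p s) * G t else 0)"
        by (simp add: sum.inter_filter fin)
      finally show ?thesis using True by simp
    qed simp
  qed
  also have "\<dots> = (\<Sum>t\<in>S. \<Sum>s\<in>S. if le p s \<and> le s t then of_int (m p s) * G t else 0)"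
    by (rule sum.swap)
  also have "\<dots> = (\<Sum>t\<in>S. if t = p then G t else 0)"
  proof (rule sum.cong[OF refl])
    fix t assume t: "t \<in> S"
    show "(\<Sum>s\<in>S. if le p s \<and> le s t then of_int (m p s) * G t else 0) = (if t = p then G t else 0)"
    proof (cases "le p t")
      case True
      have "(\<Sum>s\<in>S. if le p s \<and> le s t then of_int (m p s) * G t else 0) =
          (\<Sum>s\<in>{s\<in>S. le p s \<and> le s t}. of_int (m p s) * G t)"
        by (simp add: sum.inter_filter fin)
      also have "\<dots> = of_int (\<Sum>s\<in>{s\<in>S. le p s \<and> le s t}. m p s) * G t"
        by (simp add: sum_distrib_right)
      also have "\<dots> = of_int (if p = t then 1 else 0) * G t"
      proof -
        have "(\<Sum>s\<in>{s\<in>S. le p s \<and> le s t}. m p s) = (if p = t then 1 else 0)"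
          using mp p t True unfolding moeb_prop_def by blast
        then show ?thesis by simp
      qed
      finally show ?thesis by simp
    next
      case False
      have nn: "\<forall>s\<in>S. \<not> (le p s \<and> le s t)" using tr p t False by blast
      have "t \<noteq> p" using rf p False by blast
      moreover have "(\<Sum>s\<in>S. if le p s \<and> le s t then of_int (m p s) * G t else 0) = 0"
        by (rule sum.neutral) (use nn in auto)
      ultimately show ?thesis by simp
    qed
  qed
  also have "\<dots> = G p" using p fin by (simp add: sum.delta)
  finally show ?thesis .
qed

lemma pow_mod_root: "(\<omega>::complex) ^ n = 1 \<Longrightarrow> \<omega> ^ (a mod n) = \<omega> ^ a"
proof -
  assume h: "\<omega> ^ n = 1"
  have "\<omega> ^ a = \<omega> ^ (n * (a div n) + a mod n)" by simp
  also have "\<dots> = (\<omega> ^ n) ^ (a div n) * \<omega> ^ (a mod n)" by (simp only: power_add power_mult)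
  finally show ?thesis using h by simp
qed

lemma mod_1n: "(a::nat) \<in> {1..n} \<Longrightarrow> a mod n = (if a = n then 0 else a)"
  by (cases "a = n") simp_all

lemma mod_inj_1n: "(a::nat) \<in> {1..n} \<Longrightarrow> b \<in> {1..n} \<Longrightarrow> a mod n = b mod n \<Longrightarrow> a = b"
  using mod_1n[of a n] mod_1n[of b n] by (auto split: if_splits)




lemma F_top:
  assumes n1: "n \<ge> 1" and om: "\<omega> ^ n = 1"
  shows "(\<Sum>h\<in>{h\<in>PiE {0..<n} (\<lambda>_. {1..n}). \<forall>C\<in>top_partition n. \<forall>i\<in>C. \<forall>j\<in>C. h i = h j}.
           \<Prod>j\<in>{0..<n}. \<omega> ^ (h j)) = (of_nat n :: complex)"
proof -
  define c where "c k = (\<lambda>j\<in>{0..<n}. k)" for k :: nat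
  have set: "{h\<in>PiE {0..<n} (\<lambda>_. {1..n}). \<forall>C\<in>top_partition n. \<forall>i\<in>C. \<forall>j\<in>C. h i = h j} = c ` {1..n}"
  proof (rule set_eqI, rule iffI)
    fix h assume "h \<in> {h\<in>PiE {0..<n} (\<lambda>_. {1..n}). \<forall>C\<in>top_partition n. \<forall>i\<in>C. \<forall>j\<in>C. h i = h j}"
    then have hH: "h \<in> PiE {0..<n} (\<lambda>_. {1..n})" and hc': "\<forall>C\<in>top_partition n. \<forall>i\<in>C. \<forall>j\<in>C. h i = h j"
      by blast+
    have hc: "\<forall>i\<in>{0..<n}. \<forall>j\<in>{0..<n}. h i = h j" using hc' unfolding top_partition_def by blast
    have z: "0 \<in> {0..<n}" using n1 by simp
    have "h 0 \<in> {1..n}" using hH z by (rule PiE_mem)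
    moreover have "h = c (h 0)"
    proof
      fix j show "h j = c (h 0) j"
      proof (cases "j < n")
        case True
        then have "j \<in> {0..<n}" by simp
        then have "h j = h 0" using hc z by blast
        then show ?thesis using True unfolding c_def by simp
      next
        case False
        then have "j \<notin> {0..<n}" by simp
        then have "h j = undefined" using hH by (intro PiE_arb)
        then show ?thesis using False unfolding c_def by simp
      qed
    qed
    ultimately show "h \<in> c ` {1..n}" by blast
  next
    fix h assume "h \<in> c ` {1..n}"
    then obtain k where k: "k \<in> {1..n}" "h = c k" by blast
    then show "h \<in> {h\<in>PiE {0..<n} (\<lambda>_. {1..n}). \<forall>C\<in>top_partition n. \<forall>i\<in>C. \<forall>j\<in>C. h i = h j}"
      unfolding c_def top_partition_def by auto
  qed
  have inj: "inj_on c {1..n}"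
  proof (rule inj_onI)
    fix a b assume "c a = c b"
    then have "c a 0 = c b 0" by simp
    then show "a = b" using n1 unfolding c_def by simp
  qed
  have "(\<Sum>h\<in>c ` {1..n}. \<Prod>j\<in>{0..<n}. \<omega> ^ (h j)) = (\<Sum>k\<in>{1..n}. \<Prod>j\<in>{0..<n}. \<omega> ^ (c k j))"
    by (subst sum.reindex[OF inj]) (simp add: comp_def)
  also have "\<dots> = (\<Sum>k\<in>{1..n}. 1)"
  proof (rule sum.cong[OF refl])
    fix k
    have "(\<Prod>j\<in>{0..<n}. \<omega> ^ (c k j)) = (\<Prod>j\<in>{0..<n}. \<omega> ^ k)" unfolding c_def by (rule prod.cong) auto
    also have "\<dots> = (\<omega> ^ k) ^ n" by simp
    also have "\<dots> = (\<omega> ^ n) ^ k" by (simp add: power_mult[symmetric] mult.commute)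
    finally show "(\<Prod>j\<in>{0..<n}. \<omega> ^ (c k j)) = 1" using om by simp
  qed
  also have "\<dots> = of_nat n" by simp
  finally show ?thesis unfolding set .
qed

lemma F_zero:
  assumes n1: "n \<ge> 1" and pr: "primitive_root n \<omega>" and sig: "\<sigma> \<in> set_partitions n"
    and ntop: "\<sigma> \<noteq> top_partition n"
  shows "(\<Sum>h\<in>{h\<in>PiE {0..<n} (\<lambda>_. {1..n}). \<forall>C\<in>\<sigma>. \<forall>i\<in>C. \<forall>j\<in>C. h i = h j}.
           \<Prod>j\<in>{0..<n}. \<omega> ^ (h j)) = 0"
proof -
  have om: "\<omega> ^ n = 1" and omk: "\<forall>k\<in>{1..<n}. \<omega> ^ k \<noteq> 1" using pr unfolding primitive_root_def by auto
  obtain B where B: "B \<in> \<sigma>" "0 \<in> B" using SP_cover[OF sig, of 0] n1 by auto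
  have Bs: "B \<subseteq> {0..<n}" "B \<noteq> {}" using SP_blocks[OF sig B(1)] by auto
  have Bne: "B \<noteq> {0..<n}"
  proof
    assume Bfull: "B = {0..<n}"
    have "\<sigma> = {B}"
    proof (rule set_eqI, rule iffI)
      fix C assume C: "C \<in> \<sigma>"
      obtain x where x: "x \<in> C" using SP_blocks[OF sig C] by blast
      have "x \<in> B" using SP_blocks[OF sig C] x Bfull by blast
      then have "C = B" using SP_disj[OF sig C B(1) x] by simp
      then show "C \<in> {B}" by simp
    next
      fix C assume "C \<in> {B}" then show "C \<in> \<sigma>" using B by simp
    qed
    then show False using ntop Bfull unfolding top_partition_def by simp
  qed
  define d where "d = card B"
  have "B \<subset> {0..<n}" using Bs Bne by blast
  then have dn: "d < n" unfolding d_def using psubset_card_mono[of "{0..<n}" B] by simp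
  have d1: "d \<ge> 1" unfolding d_def using Bs finite_subset[OF Bs(1)] by (simp add: Suc_le_eq card_gt_0_iff)
  have omd: "\<omega> ^ d \<noteq> 1" using omk dn d1 by simp
  define H where "H = PiE {0..<n} (\<lambda>_. {1..n::nat})"
  define AA where "AA = {h\<in>H. \<forall>C\<in>\<sigma>. \<forall>i\<in>C. \<forall>j\<in>C. h i = h j}"
  define w where "w h = (\<Prod>j\<in>{0..<n}. \<omega> ^ (h j))" for h :: "nat \<Rightarrow> nat"
  define T where "T h = (\<lambda>j. if j \<in> B then h j mod n + 1 else h j)" for h :: "nat \<Rightarrow> nat"
  have finAA: "finite AA" unfolding AA_def H_def by (rule finite_subset[of _ "PiE {0..<n} (\<lambda>_. {1..n})"]) (auto intro: finite_PiE)
  have TA: "T ` AA \<subseteq> AA"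
  proof
    fix g assume "g \<in> T ` AA"
    then obtain h where h: "h \<in> AA" "g = T h" by blast
    have hH: "h \<in> H" and hc: "\<forall>C\<in>\<sigma>. \<forall>i\<in>C. \<forall>j\<in>C. h i = h j" using h(1) unfolding AA_def by blast+
    have "T h \<in> H" unfolding H_def PiE_iff
    proof
      show "\<forall>i\<in>{0..<n}. T h i \<in> {1..n}"
      proof
        fix i assume i: "i \<in> {0..<n}"
        have "h i \<in> {1..n}" using hH i unfolding H_def by (rule PiE_mem)
        moreover have "h i mod n + 1 \<in> {1..n}" using n1 by (simp add: Suc_le_eq)
        ultimately show "T h i \<in> {1..n}" unfolding T_def by simp
      qed
      show "T h \<in> extensional {0..<n}"
        unfolding extensional_def
      proof (intro CollectI allI impI)
        fix j assume j: "j \<notin> {0..<n}"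
        then have "j \<notin> B" using Bs by blast
        moreover have "h j = undefined" using hH j unfolding H_def by (rule PiE_arb)
        ultimately show "T h j = undefined" unfolding T_def by simp
      qed
    qed
    moreover have "\<forall>C\<in>\<sigma>. \<forall>i\<in>C. \<forall>j\<in>C. T h i = T h j"
    proof (intro ballI)
      fix C i j assume C: "C \<in> \<sigma>" and ij: "i \<in> C" "j \<in> C"
      have e: "h i = h j" by (rule hc[rule_format, OF C ij])
      show "T h i = T h j"
      proof (cases "C = B")
        case True then show ?thesis using ij e unfolding T_def by simp
      next
        case False
        have "i \<notin> B" using SP_disj[OF sig C B(1) ij(1)] False by blast
        moreover have "j \<notin> B" using SP_disj[OF sig C B(1) ij(2)] False by blast
        ultimately show ?thesis using e unfolding T_def by simp
      qed
    qed
    ultimately show "g \<in> AA" unfolding AA_def using h(2) by blast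
  qed
  have injT: "inj_on T AA"
  proof (rule inj_onI)
    fix h1 h2 assume h1: "h1 \<in> AA" and h2: "h2 \<in> AA" and eq: "T h1 = T h2"
    show "h1 = h2"
    proof
      fix j
      show "h1 j = h2 j"
      proof (cases "j \<in> B")
        case True
        then have jn: "j \<in> {0..<n}" using Bs by blast
        have "h1 \<in> H" "h2 \<in> H" using h1 h2 unfolding AA_def by blast+
        then have "h1 j \<in> {1..n}" "h2 j \<in> {1..n}" using jn unfolding H_def by (meson PiE_mem)+
        moreover have "h1 j mod n = h2 j mod n" using fun_cong[OF eq, of j] True unfolding T_def by simp
        ultimately show ?thesis by (rule mod_inj_1n)
      next
        case False
        then show ?thesis using fun_cong[OF eq, of j] unfolding T_def by simp
      qed
    qed
  qed
  have TAeq: "T ` AA = AA" by (rule endo_inj_surj[OF finAA TA injT])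
  have wT: "w (T h) = \<omega> ^ d * w h" for h
  proof -
    have "w (T h) = (\<Prod>j\<in>{0..<n}. (if j \<in> B then \<omega> else 1) * \<omega> ^ (h j))"
      unfolding w_def
    proof (rule prod.cong[OF refl])
      fix j
      show "\<omega> ^ T h j = (if j \<in> B then \<omega> else 1) * \<omega> ^ h j"
      proof (cases "j \<in> B")
        case True
        have "\<omega> ^ (h j mod n + 1) = \<omega> ^ (h j mod n) * \<omega>" by simp
        also have "\<dots> = \<omega> ^ h j * \<omega>" using pow_mod_root[OF om] by simp
        finally show ?thesis using True unfolding T_def by (simp add: mult.commute)
      next
        case False then show ?thesis unfolding T_def by simp
      qed
    qed
    also have "\<dots> = (\<Prod>j\<in>{0..<n}. (if j \<in> B then \<omega> else 1)) * w h"
      unfolding w_def by (rule prod.distrib)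
    also have "(\<Prod>j\<in>{0..<n}. (if j \<in> B then \<omega> else 1)) = (\<Prod>j\<in>{j\<in>{0..<n}. j \<in> B}. \<omega>)"
      using prod.inter_filter[where A="{0..<n}" and P="\<lambda>j. j \<in> B" and g="\<lambda>_. \<omega>"] by simp
    also have "{j\<in>{0..<n}. j \<in> B} = B" using Bs by blast
    finally show ?thesis unfolding d_def by simp
  qed
  have "sum w AA = sum w (T ` AA)" using TAeq by simp
  also have "\<dots> = sum (w \<circ> T) AA" by (rule sum.reindex[OF injT])
  also have "\<dots> = \<omega> ^ d * sum w AA" by (simp add: wT sum_distrib_left)
  finally have "(1 - \<omega> ^ d) * sum w AA = 0" by (simp add: algebra_simps)
  then have "sum w AA = 0" using omd by simp
  then show ?thesis unfolding AA_def H_def w_def .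
qed



lemma kernel_eq_moment:
  assumes exch: "\<forall>xs h \<sigma>. bij \<sigma> \<longrightarrow> mixed_moment phit iota xs (\<sigma> \<circ> h) = mixed_moment phit iota xs h"
    and keq0: "kernel_partition (length xs) h = kernel_partition (length xs) h'"
  shows "mixed_moment phit iota xs h = mixed_moment phit iota xs h'"
proof -
  define n where "n = length xs"
  have keqn: "kernel_partition n h = kernel_partition n h'" using keq0 unfolding n_def .
  have blk: "{j \<in> {0..<n}. h j = h i} = {j \<in> {0..<n}. h' j = h' i}" if i: "i < n" for i
  proof -
    have i0: "i \<in> {0..<n}" using i by simp
    have "(\<lambda>i. {j \<in> {0..<n}. h j = h i}) i \<in> (\<lambda>i. {j \<in> {0..<n}. h j = h i}) ` {0..<n}"
      using i0 by (rule imageI)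
    then have "{j \<in> {0..<n}. h j = h i} \<in> kernel_partition n h'"
      using keqn unfolding kernel_partition_def by simp
    then obtain i' where i': "i' \<in> {0..<n}" "{j \<in> {0..<n}. h j = h i} = {j \<in> {0..<n}. h' j = h' i'}"
      unfolding kernel_partition_def by blast
    have hi0: "i \<in> {j \<in> {0..<n}. h j = h i}" using i0 by simp
    have "i \<in> {j \<in> {0..<n}. h' j = h' i'}" unfolding i'(2)[symmetric] by (rule hi0)
    then have hi: "h' i = h' i'" by simp
    show ?thesis using i'(2) unfolding hi .
  qed
  have keq: "h i = h j \<longleftrightarrow> h' i = h' j" if ij: "i < n" "j < n" for i j
  proof -
    have "j \<in> {j \<in> {0..<n}. h j = h i} \<longleftrightarrow> j \<in> {j \<in> {0..<n}. h' j = h' i}" using blk[OF ij(1)] by simp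
    moreover have "j \<in> {0..<n}" using ij(2) by simp
    ultimately have "h j = h i \<longleftrightarrow> h' j = h' i" by simp
    then show ?thesis by (simp add: eq_commute)
  qed
  define A where "A = h' ` {0..<n}"
  define f where "f v = h (SOME j. j < n \<and> h' j = v)" for v
  have fval: "f (h' j) = h j" if j: "j < n" for j
  proof -
    have "\<exists>j'. j' < n \<and> h' j' = h' j" using j by blast
    then have s: "(SOME j'. j' < n \<and> h' j' = h' j) < n \<and> h' (SOME j'. j' < n \<and> h' j' = h' j) = h' j"
      by (rule someI_ex)
    then have "h (SOME j'. j' < n \<and> h' j' = h' j) = h j"
      using keq[of "SOME j'. j' < n \<and> h' j' = h' j" j] j by blast
    then show ?thesis unfolding f_def .
  qed
  have "inj_on f A"
  proof (rule inj_onI)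
    fix u v assume u: "u \<in> A" and v: "v \<in> A" and fe: "f u = f v"
    obtain i where i: "i < n" "u = h' i" using u unfolding A_def by auto
    obtain j where j: "j < n" "v = h' j" using v unfolding A_def by auto
    have "h i = h j" using fe fval[OF i(1)] fval[OF j(1)] unfolding i(2) j(2) by simp
    then have "h' i = h' j" using keq[OF i(1) j(1)] by blast
    then show "u = v" unfolding i(2) j(2) .
  qed
  moreover have "finite A" unfolding A_def by simp
  ultimately obtain \<sigma> where \<sigma>: "bij \<sigma>" "\<forall>x\<in>A. \<sigma> x = f x" using bij_extend_nat by blast
  have m1: "mixed_moment phit iota xs (\<sigma> \<circ> h') = mixed_moment phit iota xs h'" using exch \<sigma>(1) by blast
  have meq: "map (\<lambda>j. iota ((\<sigma> \<circ> h') j) (xs ! j)) [0..<length xs] = map (\<lambda>j. iota (h j) (xs ! j)) [0..<length xs]"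
  proof (rule map_cong[OF refl])
    fix j assume "j \<in> set [0..<length xs]"
    then have j: "j < n" unfolding n_def by simp
    have "h' j \<in> A" unfolding A_def using j by simp
    then have "\<sigma> (h' j) = f (h' j)" using \<sigma>(2) by blast
    also have "\<dots> = h j" using fval[OF j] .
    finally show "iota ((\<sigma> \<circ> h') j) (xs ! j) = iota (h j) (xs ! j)" by simp
  qed
  have "mixed_moment phit iota xs (\<sigma> \<circ> h') = phit (prod_list (map (\<lambda>j. iota ((\<sigma> \<circ> h') j) (xs ! j)) [0..<length xs]))"
    by (simp only: mixed_moment_def)
  also have "\<dots> = phit (prod_list (map (\<lambda>j. iota (h j) (xs ! j)) [0..<length xs]))"
    by (simp only: meq)
  also have "\<dots> = mixed_moment phit iota xs h" by (simp only: mixed_moment_def)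
  finally have "mixed_moment phit iota xs (\<sigma> \<circ> h') = mixed_moment phit iota xs h" .
  then show ?thesis using m1 by simp
qed

lemma map_as_upt: "map F xs = map (\<lambda>j. F (xs ! j)) [0..<length xs]"
  by (rule nth_equalityI) simp_all

theorem theorem2p5:
  fixes sA :: "complex \<Rightarrow> 'a::ring_1 \<Rightarrow> 'a" and phi :: "'a \<Rightarrow> complex"
    and sU :: "complex \<Rightarrow> 'u::ring_1 \<Rightarrow> 'u" and phit :: "'u \<Rightarrow> complex"
    and iota :: "nat \<Rightarrow> 'a \<Rightarrow> 'u" and xs :: "'a list" and \<omega> :: complex
  assumes "exchangeability_system sA phi sU phit iota"
    and "length xs \<ge> 1"
    and "primitive_root (length xs) \<omega>"
  shows "K_cum sU phit iota \<omega> xs =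
    (\<Sum>\<pi>\<in>set_partitions (length xs).
       phi_pi phit iota \<pi> xs *
       of_int (moebius (set_partitions (length xs)) refines \<pi> (top_partition (length xs))))"
proof -
  define n where "n = length xs"
  have n1: "n \<ge> 1" using assms(2) unfolding n_def .
  have ncU: "nc_prob_space sU phit"
    and exch: "\<forall>xs h \<sigma>. bij \<sigma> \<longrightarrow> mixed_moment phit iota xs (\<sigma> \<circ> h) = mixed_moment phit iota xs h"
    using assms(1) unfolding exchangeability_system_def by blast+
  have caU: "complex_algebra sU" and linU: "Vector_Spaces.linear sU (\<lambda>c z. c * z) phit"
    using ncU unfolding nc_prob_space_def by blast+
  have mh: "module_hom sU (\<lambda>c z. c * z) phit" using linU module_hom_iff_linear by blast
  have om: "\<omega> ^ n = 1" using assms(3) unfolding primitive_root_def n_def by blast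
  define H where "H = PiE {0..<n} (\<lambda>_. {1..n::nat})"
  define w where "w h = (\<Prod>j\<in>{0..<n}. \<omega> ^ (h j))" for h :: "nat \<Rightarrow> nat"
  define SP where "SP = set_partitions n"
  define ker where "ker = kernel_partition n"
  define G where "G p = (\<Sum>h\<in>{h\<in>H. ker h = p}. w h)" for p
  define F where "F s = (\<Sum>h\<in>{h\<in>H. \<forall>C\<in>s. \<forall>i\<in>C. \<forall>j\<in>C. h i = h j}. w h)" for s :: "nat set set"
  define top where "top = top_partition n"
  define mu where "mu = moebius SP refines"
  have finH: "finite H" unfolding H_def by (rule finite_PiE) simp_all
  have finSP: "finite SP" unfolding SP_def by (rule SP_finite)
  have kerSP: "ker ` H \<subseteq> SP" unfolding ker_def SP_def using ker_in_SP by blast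
  have stepA: "K_cum sU phit iota \<omega> xs = (1 / of_nat n) * (\<Sum>h\<in>H. w h * mixed_moment phit iota xs h)"
  proof -
    have e1: "map (\<lambda>x. \<Sum>k=1..length xs. sU (\<omega> ^ k) (iota k x)) xs =
        map (\<lambda>j. \<Sum>k\<in>{1..n}. sU (\<omega> ^ k) (iota k (xs ! j))) [0..<n]"
      unfolding n_def by (rule map_as_upt)
    have "prod_list (map (\<lambda>j. \<Sum>k\<in>{1..n}. sU (\<omega> ^ k) (iota k (xs ! j))) [0..<n]) =
        (\<Sum>h\<in>H. prod_list (map (\<lambda>j. sU (\<omega> ^ h j) (iota (h j) (xs ! j))) [0..<n]))"
      unfolding H_def by (rule prod_list_expand) simp
    also have "\<dots> = (\<Sum>h\<in>H. sU (w h) (prod_list (map (\<lambda>j. iota (h j) (xs ! j)) [0..<n])))"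
    proof (rule sum.cong[OF refl])
      fix h
      show "prod_list (map (\<lambda>j. sU (\<omega> ^ h j) (iota (h j) (xs ! j))) [0..<n]) =
          sU (w h) (prod_list (map (\<lambda>j. iota (h j) (xs ! j)) [0..<n]))"
        using scale_prod_list[OF caU, of "\<lambda>j. \<omega> ^ h j" "\<lambda>j. iota (h j) (xs ! j)" "[0..<n]"]
        unfolding w_def prod_list_upt_comm by simp
    qed
    finally have e2: "phit (prod_list (map (\<lambda>x. \<Sum>k=1..length xs. sU (\<omega> ^ k) (iota k x)) xs)) =
        phit (\<Sum>h\<in>H. sU (w h) (prod_list (map (\<lambda>j. iota (h j) (xs ! j)) [0..<n])))"
      unfolding e1 by simp
    also have "\<dots> = (\<Sum>h\<in>H. w h * mixed_moment phit iota xs h)"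
      unfolding module_hom.sum[OF mh] module_hom.scale[OF mh] mixed_moment_def n_def ..
    finally show ?thesis unfolding K_cum_def n_def by simp
  qed
  have stepB: "mixed_moment phit iota xs h = phi_pi phit iota (ker h) xs" for h
  proof -
    have "\<exists>h'. kernel_partition (length xs) h' = ker h" unfolding ker_def n_def by blast
    then have "kernel_partition (length xs) (SOME h'. kernel_partition (length xs) h' = ker h) = ker h"
      by (rule someI_ex)
    then have "kernel_partition (length xs) h = kernel_partition (length xs) (SOME h'. kernel_partition (length xs) h' = ker h)"
      unfolding ker_def n_def by simp
    from kernel_eq_moment[OF exch this] show ?thesis unfolding phi_pi_def n_def ker_def by simp
  qed
  have stepC: "(\<Sum>h\<in>H. w h * mixed_moment phit iota xs h) = (\<Sum>p\<in>SP. phi_pi phit iota p xs * G p)"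
  proof -
    have "(\<Sum>h\<in>H. w h * mixed_moment phit iota xs h) = (\<Sum>h\<in>H. w h * phi_pi phit iota (ker h) xs)"
      using stepB by simp
    also have "\<dots> = (\<Sum>p\<in>SP. \<Sum>h\<in>{x. x \<in> H \<and> ker x = p}. w h * phi_pi phit iota (ker h) xs)"
      by (rule sum.group[symmetric, OF finH finSP kerSP])
    also have "\<dots> = (\<Sum>p\<in>SP. phi_pi phit iota p xs * G p)"
    proof (rule sum.cong[OF refl])
      fix p
      have "(\<Sum>h\<in>{x. x \<in> H \<and> ker x = p}. w h * phi_pi phit iota (ker h) xs) =
            (\<Sum>h\<in>{x. x \<in> H \<and> ker x = p}. phi_pi phit iota p xs * w h)"
        by (rule sum.cong) (simp_all add: mult.commute)
      then show "(\<Sum>h\<in>{x. x \<in> H \<and> ker x = p}. w h * phi_pi phit iota (ker h) xs) = phi_pi phit iota p xs * G p"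
        unfolding G_def by (simp add: sum_distrib_left)
    qed
    finally show ?thesis .
  qed
  have rf: "\<forall>x\<in>SP. refines x x" using refines_refl' by blast
  have an: "\<forall>x\<in>SP. \<forall>y\<in>SP. refines x y \<longrightarrow> refines y x \<longrightarrow> x = y"
    unfolding SP_def using refines_antisym' by blast
  have tr: "\<forall>x\<in>SP. \<forall>y\<in>SP. \<forall>z\<in>SP. refines x y \<longrightarrow> refines y z \<longrightarrow> refines x z"
    using refines_trans' by blast
  have mp: "moeb_prop SP refines mu" unfolding mu_def by (rule moebius_prop[OF finSP rf an tr])
  have topSP: "top \<in> SP" unfolding top_def SP_def set_partitions_def top_partition_def
    using partition_on_space[of "{0..<n}"] n1 by simp
  have le_top: "refines p top" if "p \<in> SP" for p
    unfolding refines_def top_def top_partition_def using SP_blocks[OF that[unfolded SP_def]] by blast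
  have D1: "\<forall>s\<in>SP. F s = (\<Sum>t\<in>{t\<in>SP. refines s t}. G t)"
  proof
    fix s assume s: "s \<in> SP"
    have "{h\<in>H. \<forall>C\<in>s. \<forall>i\<in>C. \<forall>j\<in>C. h i = h j} = {h\<in>H. refines s (ker h)}"
      using refines_ker_iff[OF s[unfolded SP_def]] unfolding ker_def by blast
    then have "F s = (\<Sum>h\<in>{h\<in>H. refines s (ker h)}. w h)" unfolding F_def by simp
    also have "\<dots> = (\<Sum>h\<in>H. if refines s (ker h) then w h else 0)"
      by (rule sum.inter_filter[OF finH])
    also have "\<dots> = (\<Sum>t\<in>SP. \<Sum>h\<in>{x. x \<in> H \<and> ker x = t}. if refines s (ker h) then w h else 0)"
      by (rule sum.group[symmetric, OF finH finSP kerSP])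
    also have "\<dots> = (\<Sum>t\<in>SP. if refines s t then G t else 0)"
    proof (rule sum.cong[OF refl])
      fix t
      have "(\<Sum>h\<in>{x. x \<in> H \<and> ker x = t}. if refines s (ker h) then w h else 0) =
            (\<Sum>h\<in>{x. x \<in> H \<and> ker x = t}. if refines s t then w h else 0)"
        by (rule sum.cong) auto
      then show "(\<Sum>h\<in>{x. x \<in> H \<and> ker x = t}. if refines s (ker h) then w h else 0) = (if refines s t then G t else 0)"
        unfolding G_def by simp
    qed
    also have "\<dots> = (\<Sum>t\<in>{t\<in>SP. refines s t}. G t)"
      by (rule sum.inter_filter[OF finSP, symmetric])
    finally show "F s = (\<Sum>t\<in>{t\<in>SP. refines s t}. G t)" .
  qed
  have D2: "F top = of_nat n"
    unfolding F_def H_def w_def top_def using F_top[OF n1 om] by simp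
  have D3: "F s = 0" if "s \<in> SP" "s \<noteq> top" for s
    unfolding F_def H_def w_def using F_zero[OF n1 assms(3)[folded n_def] that[unfolded SP_def top_def]] by simp
  have D: "G p = of_nat n * of_int (mu p top)" if p: "p \<in> SP" for p
  proof -
    have "G p = (\<Sum>s\<in>{s\<in>SP. refines p s}. of_int (mu p s) * F s)"
      by (rule moeb_inversion[OF finSP rf tr mp p D1, symmetric])
    also have "\<dots> = (\<Sum>s\<in>{s\<in>SP. refines p s}. if s = top then of_int (mu p top) * of_nat n else 0)"
    proof (rule sum.cong[OF refl])
      fix s assume "s \<in> {s\<in>SP. refines p s}"
      then have "s \<in> SP" by simp
      then show "of_int (mu p s) * F s = (if s = top then of_int (mu p top) * of_nat n else 0)"
        using D2 D3[of s] by (cases "s = top") simp_all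
    qed
    also have "\<dots> = of_int (mu p top) * of_nat n"
    proof -
      have "top \<in> {s\<in>SP. refines p s}" using topSP le_top[OF p] by simp
      moreover have "finite {s\<in>SP. refines p s}" using finSP by simp
      ultimately show ?thesis by (simp add: sum.delta')
    qed
    finally show ?thesis by (simp add: mult.commute)
  qed
  have "K_cum sU phit iota \<omega> xs = (1 / of_nat n) * (\<Sum>p\<in>SP. phi_pi phit iota p xs * G p)"
    using stepA stepC by simp
  also have "\<dots> = (\<Sum>p\<in>SP. phi_pi phit iota p xs * of_int (mu p top))"
    unfolding sum_distrib_left
  proof (rule sum.cong[OF refl])
    fix p assume p: "p \<in> SP"
    have "of_nat n \<noteq> (0::complex)" using n1 by simp
    then show "1 / of_nat n * (phi_pi phit iota p xs * G p) = phi_pi phit iota p xs * of_int (mu p top)"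
      unfolding D[OF p] by (simp add: field_simps)
  qed
  finally show ?thesis unfolding SP_def mu_def top_def n_def .
qed


end
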